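(* Let $p \geq q$ and $n\ge 1$ be positive integers and let $B$ be a $p\times q$ matrix with nonnegative real entries. Let $C$ be the $(nq+p)\times(nq+p)$ block matrix whose first block row is $[\,0_p\ B\ B\ \cdots\ B\,]$ ($n$ copies of $B$), whose first block column is $[\,0_p\ B^T\ \cdots\ B^T\,]^T$ ($n$ copies of $B^T$), and whose remaining blocks are all zero; and let $D$ be the $(np+q)\times(np+q)$ block matrix whose first block row is $[\,0_q\ B^T\ B^T\ \cdots\ B^T\,]$ ($n$ copies of $B^T$), whose first block column is $[\,0_q\ B\ \cdots\ B\,]^T$ ($n$ copies of $B$), and whose remaining blocks are all zero. Then the normalized Laplacians $L(C\oplus 0_{(n-1)(p-q)})$ and $L(D)$ are cospectral.
   Context: For matrices $X,Y$, $X\oplus Y=\begin{bmatrix} X&0\\0&Y\end{bmatrix}$; $0_m$ is the $m\times m$ zero matrix. For a nonnegative real symmetric matrix $M$ with positive row sums, its normalized Laplacian is $L(M)=I-\Delta^{-1/2}M\Delta^{-1/2}$, where $\Delta$ is the diagonal matrix of row sums of $M$. If $M$ has zero row sums, write (after a simultaneous permutation of rows and columns) $M=M_1\oplus 0_k$ where $M_1$ has positive row sums; then $L(M)=L(M_1)\oplus I_k$ (equivalently, $L(M)=I-(\Delta^{\dagger})^{1/2}M(\Delta^{\dagger})^{1/2}$ with $\Delta^\dagger$ the Moore–Penrose inverse of $\Delta$). Two square matrices are cospectral if they have the same eigenvalues with the same multiplicities. *)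

theory Defs
  imports "Jordan_Normal_Form.Char_Poly" "Jordan_Normal_Form.Matrix"
begin

definition dsum :: "real mat \<Rightarrow> real mat \<Rightarrow> real mat" where
  "dsum X Y = four_block_mat X (0\<^sub>m (dim_row X) (dim_col Y)) (0\<^sub>m (dim_row Y) (dim_col X)) Y"

definition rowsum :: "real mat \<Rightarrow> nat \<Rightarrow> real" where
  "rowsum M i = (\<Sum>j<dim_col M. M $$ (i, j))"

definition dhalf :: "real mat \<Rightarrow> nat \<Rightarrow> real" where
  "dhalf M i = (if rowsum M i > 0 then 1 / sqrt (rowsum M i) else 0)"

definition norm_lap :: "real mat \<Rightarrow> real mat" where
  "norm_lap M = mat (dim_row M) (dim_col M)
     (\<lambda>(i, j). (if i = j then 1 else 0) - dhalf M i * M $$ (i, j) * dhalf M j)"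

definition cospectral :: "real mat \<Rightarrow> real mat \<Rightarrow> bool" where
  "cospectral X Y \<longleftrightarrow> X \<in> carrier_mat (dim_row X) (dim_row X) \<and> Y \<in> carrier_mat (dim_row X) (dim_row X)
     \<and> (\<forall>z::complex. order z (char_poly (map_mat complex_of_real X))
                   = order z (char_poly (map_mat complex_of_real Y)))"

definition blockC :: "nat \<Rightarrow> nat \<Rightarrow> nat \<Rightarrow> real mat \<Rightarrow> real mat" where
  "blockC n p q B = mat (n * q + p) (n * q + p) (\<lambda>(i, j).
     if i < p \<and> p \<le> j then B $$ (i, (j - p) mod q)
     else if p \<le> i \<and> j < p then B $$ (j, (i - p) mod q)
     else 0)"

definition blockD :: "nat \<Rightarrow> nat \<Rightarrow> nat \<Rightarrow> real mat \<Rightarrow> real mat" where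
  "blockD n p q B = mat (n * p + q) (n * p + q) (\<lambda>(i, j).
     if i < q \<and> q \<le> j then B $$ ((j - q) mod p, i)
     else if q \<le> i \<and> j < q then B $$ ((i - q) mod p, j)
     else 0)"

end

theory Submission
  imports Defs
begin


lemma blk_G1:
  fixes y :: "'a::idom"
  assumes P: "P \<in> carrier_mat a b" and Q: "Q \<in> carrier_mat b a"
  shows "det (four_block_mat (y \<cdot>\<^sub>m 1\<^sub>m a) P Q (y \<cdot>\<^sub>m 1\<^sub>m b)) * y^a
       = y^b * det (y^2 \<cdot>\<^sub>m 1\<^sub>m a - P*Q)"
proof -
  let ?N = "four_block_mat (y \<cdot>\<^sub>m 1\<^sub>m a) P Q (y \<cdot>\<^sub>m 1\<^sub>m b)"
  let ?R = "four_block_mat (y \<cdot>\<^sub>m 1\<^sub>m a) (0\<^sub>m a b) (-Q) (1\<^sub>m b)"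
  have e1: "(y \<cdot>\<^sub>m 1\<^sub>m a) * (y \<cdot>\<^sub>m 1\<^sub>m a) + P * (-Q) = y^2 \<cdot>\<^sub>m 1\<^sub>m a - P*Q"
    using P Q by (intro eq_matI) (auto simp: power2_eq_square)
  have e2: "(y \<cdot>\<^sub>m 1\<^sub>m a) * 0\<^sub>m a b + P * 1\<^sub>m b = P"
    using P Q by (intro eq_matI) auto
  have e3: "Q * (y \<cdot>\<^sub>m 1\<^sub>m a) + (y \<cdot>\<^sub>m 1\<^sub>m b) * (-Q) = 0\<^sub>m b a"
    using P Q by (intro eq_matI) auto
  have e4: "Q * 0\<^sub>m a b + (y \<cdot>\<^sub>m 1\<^sub>m b) * 1\<^sub>m b = y \<cdot>\<^sub>m 1\<^sub>m b"
    using P Q by (intro eq_matI) auto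
  have "?N * ?R = four_block_mat ((y \<cdot>\<^sub>m 1\<^sub>m a) * (y \<cdot>\<^sub>m 1\<^sub>m a) + P * (-Q))
     ((y \<cdot>\<^sub>m 1\<^sub>m a) * 0\<^sub>m a b + P * 1\<^sub>m b) (Q * (y \<cdot>\<^sub>m 1\<^sub>m a) + (y \<cdot>\<^sub>m 1\<^sub>m b) * (-Q))
     (Q * 0\<^sub>m a b + (y \<cdot>\<^sub>m 1\<^sub>m b) * 1\<^sub>m b)"
    by (rule mult_four_block_mat) (use P Q in auto)
  then have NR: "?N * ?R = four_block_mat (y^2 \<cdot>\<^sub>m 1\<^sub>m a - P*Q) P (0\<^sub>m b a) (y \<cdot>\<^sub>m 1\<^sub>m b)"
    by (simp only: e1 e2 e3 e4)
  have "det (?N * ?R) = det ?N * det ?R"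
    by (rule det_mult[of _ "a+b"], insert P Q, auto)
  also have "det ?R = y^a"
    by (subst det_four_block_mat_upper_right_zero[of _ a _ b], insert Q, auto)
  finally have "det ?N * y^a = det (?N * ?R)" by simp
  also have "\<dots> = det (y^2 \<cdot>\<^sub>m 1\<^sub>m a - P*Q) * y^b"
    unfolding NR
    by (subst det_four_block_mat_lower_left_zero[of _ a _ b], insert P Q, auto)
  finally show ?thesis by simp
qed

lemma blk_G2:
  fixes y :: "'a::idom"
  assumes P: "P \<in> carrier_mat a b" and Q: "Q \<in> carrier_mat b a"
  shows "det (four_block_mat (y \<cdot>\<^sub>m 1\<^sub>m a) P Q (y \<cdot>\<^sub>m 1\<^sub>m b)) * y^b
       = y^a * det (y^2 \<cdot>\<^sub>m 1\<^sub>m b - Q*P)"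
proof -
  let ?N = "four_block_mat (y \<cdot>\<^sub>m 1\<^sub>m a) P Q (y \<cdot>\<^sub>m 1\<^sub>m b)"
  let ?R = "four_block_mat (1\<^sub>m a) (-P) (0\<^sub>m b a) (y \<cdot>\<^sub>m 1\<^sub>m b)"
  have e1: "(y \<cdot>\<^sub>m 1\<^sub>m a) * 1\<^sub>m a + P * 0\<^sub>m b a = y \<cdot>\<^sub>m 1\<^sub>m a"
    using P Q by (intro eq_matI) auto
  have e2: "(y \<cdot>\<^sub>m 1\<^sub>m a) * (-P) + P * (y \<cdot>\<^sub>m 1\<^sub>m b) = 0\<^sub>m a b"
    using P Q by (intro eq_matI) auto
  have e3: "Q * 1\<^sub>m a + (y \<cdot>\<^sub>m 1\<^sub>m b) * 0\<^sub>m b a = Q"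
    using P Q by (intro eq_matI) auto
  have e4: "Q * (-P) + (y \<cdot>\<^sub>m 1\<^sub>m b) * (y \<cdot>\<^sub>m 1\<^sub>m b) = y^2 \<cdot>\<^sub>m 1\<^sub>m b - Q*P"
    using P Q by (intro eq_matI) (auto simp: power2_eq_square)
  have "?N * ?R = four_block_mat ((y \<cdot>\<^sub>m 1\<^sub>m a) * 1\<^sub>m a + P * 0\<^sub>m b a)
     ((y \<cdot>\<^sub>m 1\<^sub>m a) * (-P) + P * (y \<cdot>\<^sub>m 1\<^sub>m b)) (Q * 1\<^sub>m a + (y \<cdot>\<^sub>m 1\<^sub>m b) * 0\<^sub>m b a)
     (Q * (-P) + (y \<cdot>\<^sub>m 1\<^sub>m b) * (y \<cdot>\<^sub>m 1\<^sub>m b))"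
    by (rule mult_four_block_mat) (use P Q in auto)
  then have NR: "?N * ?R = four_block_mat (y \<cdot>\<^sub>m 1\<^sub>m a) (0\<^sub>m a b) Q (y^2 \<cdot>\<^sub>m 1\<^sub>m b - Q*P)"
    by (simp only: e1 e2 e3 e4)
  have "det (?N * ?R) = det ?N * det ?R"
    by (rule det_mult[of _ "a+b"], insert P Q, auto)
  also have "det ?R = y^b"
    by (subst det_four_block_mat_lower_left_zero[of _ a _ b], insert P, auto)
  finally have "det ?N * y^b = det (?N * ?R)" by simp
  also have "\<dots> = y^a * det (y^2 \<cdot>\<^sub>m 1\<^sub>m b - Q*P)"
    unfolding NR
    by (subst det_four_block_mat_upper_right_zero[of _ a _ b], insert P Q, auto)
  finally show ?thesis by simp
qed

lemma ypoly: "pCons 0 1 - 1 = pCons (- 1) (1::'a::comm_ring_1 poly)"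
  by (simp add: one_pCons)

interpretation cpoly: comm_ring_hom "\<lambda>x::'a::comm_ring_1. [:x:]"
  by unfold_locales auto

lemma char_lap:
  fixes P :: "'a::idom mat"
  assumes P: "P \<in> carrier_mat a b" and Q: "Q \<in> carrier_mat b a"
  shows "char_poly (four_block_mat (1\<^sub>m a) (-P) (-Q) (1\<^sub>m b)) * [:-1,1:]^a
     = [:-1,1:]^b * det ([:-1,1:]^2 \<cdot>\<^sub>m 1\<^sub>m a - map_mat (\<lambda>x. [:x:]) (P*Q))"
proof -
  let ?y = "[:-1,1:] :: 'a poly"
  have "char_poly_matrix (four_block_mat (1\<^sub>m a) (-P) (-Q) (1\<^sub>m b))
     = four_block_mat (?y \<cdot>\<^sub>m 1\<^sub>m a) (map_mat (\<lambda>x. [:x:]) P) (map_mat (\<lambda>x. [:x:]) Q) (?y \<cdot>\<^sub>m 1\<^sub>m b)"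
    unfolding char_poly_matrix_def using P Q
    by (intro eq_matI) (auto simp: four_block_mat_def ypoly)
  then have "char_poly (four_block_mat (1\<^sub>m a) (-P) (-Q) (1\<^sub>m b)) * ?y^a
      = ?y^b * det (?y^2 \<cdot>\<^sub>m 1\<^sub>m a - map_mat (\<lambda>x. [:x:]) P * map_mat (\<lambda>x. [:x:]) Q)"
    unfolding char_poly_def using P Q by (simp add: blk_G1[of _ a b])
  also have "map_mat (\<lambda>x. [:x:]) P * map_mat (\<lambda>x. [:x:]) Q = map_mat (\<lambda>x. [:x:]) (P*Q)"
    using cpoly.mat_hom_mult[OF P Q] by simp
  finally show ?thesis .
qed



lemma sum_mod_rep:
  fixes f :: "nat \<Rightarrow> 'a::comm_semiring_1"
  shows "(\<Sum>t<n*q. f (t mod q)) = of_nat n * (\<Sum>k<q. f k)"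
proof (induction n)
  case 0 then show ?case by simp
next
  case (Suc n)
  have "(\<Sum>t<Suc n*q. f (t mod q)) = (\<Sum>t<n*q. f (t mod q)) + (\<Sum>t=n*q..<n*q+q. f (t mod q))"
    unfolding mult_Suc add.commute[of q "n*q"] lessThan_atLeast0
    by (rule sum.atLeastLessThan_concat[symmetric]) auto
  also have "(\<Sum>t=n*q..<n*q+q. f (t mod q)) = (\<Sum>k<q. f k)"
  proof -
    have "(\<Sum>t=n*q..<n*q+q. f (t mod q)) = (\<Sum>k=0..<q. f ((k + n*q) mod q))"
      using sum.shift_bounds_nat_ivl[of "\<lambda>t. f (t mod q)" 0 "n*q" q] by (simp add: add.commute)
    also have "\<dots> = (\<Sum>k<q. f k)"
      by (intro sum.cong) auto
    finally show ?thesis .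
  qed
  finally show ?case using Suc by (simp add: algebra_simps)
qed

lemma normlap_block:
  assumes M: "M \<in> carrier_mat (a+b) (a+b)"
    and z1: "\<And>i j. i < a \<Longrightarrow> j < a \<Longrightarrow> M $$ (i,j) = 0"
    and z2: "\<And>i j. a \<le> i \<Longrightarrow> a \<le> j \<Longrightarrow> i < a+b \<Longrightarrow> j < a+b \<Longrightarrow> M $$ (i,j) = 0"
  shows "norm_lap M = four_block_mat (1\<^sub>m a)
      (- mat a b (\<lambda>(i,j). dhalf M i * M $$ (i,a+j) * dhalf M (a+j)))
      (- mat b a (\<lambda>(j,i). dhalf M (a+j) * M $$ (a+j,i) * dhalf M i)) (1\<^sub>m b)"
  using M unfolding norm_lap_def
  by (intro eq_matI) (auto simp: z1 z2)



definition fh :: "real \<Rightarrow> real" where "fh x = (if x > 0 then 1 / sqrt x else 0)"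

lemma dhalf_fh: "dhalf M i = fh (rowsum M i)"
  unfolding dhalf_def fh_def by simp

lemma fh_swap: assumes "k > 0" shows "fh (k * x) * fh y = fh (k * y) * fh x"
proof (cases "x > 0 \<and> y > 0")
  case True
  then show ?thesis using assms
    by (simp add: fh_def real_sqrt_mult zero_less_mult_iff)
next
  case False
  then show ?thesis using assms
    by (auto simp: fh_def zero_less_mult_iff)
qed

lemma sum_restrict_ivl:
  fixes h :: "nat \<Rightarrow> 'a::comm_monoid_add"
  assumes "p + L \<le> N"
  shows "(\<Sum>j<N. if p \<le> j \<and> j < p + L then h (j - p) else 0) = (\<Sum>t<L. h t)"
proof -
  have "(\<Sum>j<N. if p \<le> j \<and> j < p + L then h (j - p) else 0)
      = (\<Sum>j\<in>{..<N} \<inter> {p..<p+L}. h (j - p))"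
    by (subst sum.inter_restrict) (auto intro!: sum.cong)
  also have "{..<N} \<inter> {p..<p+L} = {p..<p+L}" using assms by auto
  also have "(\<Sum>j\<in>{p..<p+L}. h (j - p)) = (\<Sum>t<L. h t)"
    using sum.shift_bounds_nat_ivl[of "\<lambda>j. h (j - p)" 0 p L] by (simp add: lessThan_atLeast0 add.commute)
  finally show ?thesis .
qed



context
  fixes n p q :: nat and B :: "real mat"
  assumes q1: "q \<ge> 1" and pq: "p \<ge> q" and n1: "n \<ge> 1"
    and Bc: "B \<in> carrier_mat p q"
begin

definition "NN = n * p + q"
definition "Cm = dsum (blockC n p q B) (0\<^sub>m ((n - 1) * (p - q)) ((n - 1) * (p - q)))"
definition "Dm = blockD n p q B"
definition "rr l = (\<Sum>k<q. B $$ (l, k))"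
definition "cc k = (\<Sum>l<p. B $$ (l, k))"

lemma NN_eq: "n * q + p + (n - 1) * (p - q) = NN"
proof -
  obtain n' where "n = Suc n'" using n1 by (cases n) auto
  moreover obtain d where "p = q + d" using pq le_Suc_ex by blast
  ultimately show ?thesis unfolding NN_def by (simp add: algebra_simps)
qed

lemma Cm_carrier: "Cm \<in> carrier_mat NN NN"
proof -
  have "blockC n p q B \<in> carrier_mat (n*q+p) (n*q+p)" by (simp add: blockC_def)
  then show ?thesis unfolding Cm_def dsum_def NN_eq[symmetric]
    by (intro four_block_carrier_mat) auto
qed

lemma Dm_carrier: "Dm \<in> carrier_mat NN NN"
  unfolding Dm_def blockD_def NN_def by simp

lemma Cm_idx: assumes "i < NN" "j < NN"
  shows "Cm $$ (i,j) = (if i < p \<and> p \<le> j \<and> j < p + n*q then B $$ (i, (j - p) mod q)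
     else if p \<le> i \<and> i < p + n*q \<and> j < p then B $$ (j, (i - p) mod q) else 0)"
proof -
  let ?m = "(n - 1) * (p - q)"
  have dims: "dim_row (blockC n p q B) = n*q+p" "dim_col (blockC n p q B) = n*q+p" by (auto simp: blockC_def)
  have "Cm $$ (i,j) = (if i < n*q+p then if j < n*q+p then blockC n p q B $$ (i,j) else 0 else
       if j < n*q+p then 0 else 0)"
    unfolding Cm_def dsum_def using assms NN_eq
    by (subst index_mat_four_block) (auto simp: dims)
  also have "\<dots> = (if i < p \<and> p \<le> j \<and> j < p + n*q then B $$ (i, (j - p) mod q)
     else if p \<le> i \<and> i < p + n*q \<and> j < p then B $$ (j, (i - p) mod q) else 0)"
    by (auto simp: blockC_def)
  finally show ?thesis .
qed

lemma Dm_idx: assumes "i < NN" "j < NN"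
  shows "Dm $$ (i,j) = (if i < q \<and> q \<le> j then B $$ ((j - q) mod p, i)
     else if q \<le> i \<and> j < q then B $$ ((i - q) mod p, j) else 0)"
  using assms unfolding Dm_def blockD_def NN_def by auto

lemma NN_ge: "p + n*q \<le> NN" using NN_eq by simp

lemma rs_C1: assumes "i < p" shows "rowsum Cm i = real n * rr i"
proof -
  have "rowsum Cm i = (\<Sum>j<NN. Cm $$ (i,j))" unfolding rowsum_def using Cm_carrier by simp
  also have "\<dots> = (\<Sum>j<NN. if p \<le> j \<and> j < p + n*q then B $$ (i, (j - p) mod q) else 0)"
    using assms NN_ge by (intro sum.cong) (auto simp: Cm_idx)
  also have "\<dots> = (\<Sum>t<n*q. B $$ (i, t mod q))"
    by (rule sum_restrict_ivl[OF NN_ge])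
  also have "\<dots> = real n * rr i" unfolding rr_def by (rule sum_mod_rep)
  finally show ?thesis .
qed

lemma rs_C2: assumes "t < n*q" shows "rowsum Cm (p+t) = cc (t mod q)"
proof -
  have "rowsum Cm (p+t) = (\<Sum>j<NN. Cm $$ (p+t,j))" unfolding rowsum_def using Cm_carrier by simp
  also have "\<dots> = (\<Sum>j<NN. if 0 \<le> j \<and> j < 0 + p then B $$ (j - 0, t mod q) else 0)"
    using assms NN_ge by (intro sum.cong) (auto simp: Cm_idx)
  also have "\<dots> = (\<Sum>l<p. B $$ (l, t mod q))"
    by (rule sum_restrict_ivl) (use NN_ge in simp)
  finally show ?thesis unfolding cc_def .
qed

lemma rs_D1: assumes "k < q" shows "rowsum Dm k = real n * cc k"
proof -
  have "rowsum Dm k = (\<Sum>j<NN. Dm $$ (k,j))" unfolding rowsum_def using Dm_carrier by simp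
  also have "\<dots> = (\<Sum>j<NN. if q \<le> j \<and> j < q + n*p then B $$ ((j - q) mod p, k) else 0)"
    using assms by (intro sum.cong) (auto simp: Dm_idx NN_def)
  also have "\<dots> = (\<Sum>t<n*p. B $$ (t mod p, k))"
    by (rule sum_restrict_ivl) (simp add: NN_def)
  also have "\<dots> = real n * cc k" unfolding cc_def by (rule sum_mod_rep)
  finally show ?thesis .
qed

lemma rs_D2: assumes "t < n*p" shows "rowsum Dm (q+t) = rr (t mod p)"
proof -
  have "rowsum Dm (q+t) = (\<Sum>j<NN. Dm $$ (q+t,j))" unfolding rowsum_def using Dm_carrier by simp
  also have "\<dots> = (\<Sum>j<NN. if 0 \<le> j \<and> j < 0 + q then B $$ (t mod p, j - 0) else 0)"
    using assms by (intro sum.cong) (auto simp: Dm_idx NN_def)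
  also have "\<dots> = (\<Sum>k<q. B $$ (t mod p, k))"
    by (rule sum_restrict_ivl) (simp add: NN_def)
  finally show ?thesis unfolding rr_def .
qed

definition "XX = mat p q (\<lambda>(i,k). fh (real n * rr i) * B $$ (i,k) * fh (cc k))"

lemma XX_carrier: "XX \<in> carrier_mat p q" unfolding XX_def by simp

lemma PC_eq: "mat p (NN - p) (\<lambda>(i,j). dhalf Cm i * Cm $$ (i,p+j) * dhalf Cm (p+j))
   = mat p (NN - p) (\<lambda>(i,j). if j < n*q then XX $$ (i, j mod q) else 0)"
proof (intro eq_matI)
  fix i j assume i: "i < dim_row (mat p (NN - p) (\<lambda>(i,j). if j < n*q then XX $$ (i, j mod q) else 0))"
    and j: "j < dim_col (mat p (NN - p) (\<lambda>(i,j). if j < n*q then XX $$ (i, j mod q) else 0))"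
  then have i: "i < p" and j: "j < NN - p" by auto
  have iN: "i < NN" "p + j < NN" using i j NN_ge by auto
  show "mat p (NN - p) (\<lambda>(i,j). dhalf Cm i * Cm $$ (i,p+j) * dhalf Cm (p+j)) $$ (i,j)
     = mat p (NN - p) (\<lambda>(i,j). if j < n*q then XX $$ (i, j mod q) else 0) $$ (i,j)"
  proof (cases "j < n*q")
    case True
    have "q > 0" using q1 by simp
    then show ?thesis using i j iN True
      by (simp add: Cm_idx dhalf_fh rs_C1 rs_C2 XX_def)
  next
    case False
    then show ?thesis using i j iN by (simp add: Cm_idx)
  qed
qed auto

lemma QC_eq: "mat (NN - p) p (\<lambda>(j,i). dhalf Cm (p+j) * Cm $$ (p+j,i) * dhalf Cm i)
   = mat (NN - p) p (\<lambda>(j,i). if j < n*q then XX $$ (i, j mod q) else 0)"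
proof (intro eq_matI)
  fix j i assume j: "j < dim_row (mat (NN - p) p (\<lambda>(j,i). if j < n*q then XX $$ (i, j mod q) else 0))"
    and i: "i < dim_col (mat (NN - p) p (\<lambda>(j,i). if j < n*q then XX $$ (i, j mod q) else 0))"
  then have i: "i < p" and j: "j < NN - p" by auto
  have iN: "i < NN" "p + j < NN" using i j NN_ge by auto
  show "mat (NN - p) p (\<lambda>(j,i). dhalf Cm (p+j) * Cm $$ (p+j,i) * dhalf Cm i) $$ (j,i)
     = mat (NN - p) p (\<lambda>(j,i). if j < n*q then XX $$ (i, j mod q) else 0) $$ (j,i)"
  proof (cases "j < n*q")
    case True
    have "q > 0" using q1 by simp
    then show ?thesis using i j iN True
      by (simp add: Cm_idx dhalf_fh rs_C1 rs_C2 XX_def)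
  next
    case False
    then show ?thesis using i j iN by (simp add: Cm_idx)
  qed
qed auto

lemma PD_eq: "mat q (NN - q) (\<lambda>(k,t). dhalf Dm k * Dm $$ (k,q+t) * dhalf Dm (q+t))
   = mat q (NN - q) (\<lambda>(k,t). XX $$ (t mod p, k))"
proof (intro eq_matI)
  fix k t assume k: "k < dim_row (mat q (NN - q) (\<lambda>(k,t). XX $$ (t mod p, k)))"
    and t: "t < dim_col (mat q (NN - q) (\<lambda>(k,t). XX $$ (t mod p, k)))"
  then have k: "k < q" and t: "t < n*p" by (auto simp: NN_def)
  have p0: "p > 0" using q1 pq by simp
  have n0: "real n > 0" using n1 by simp
  have kN: "k < NN" "q + t < NN" using k t by (auto simp: NN_def)
  have "dhalf Dm k * Dm $$ (k,q+t) * dhalf Dm (q+t) = fh (real n * cc k) * fh (rr (t mod p)) * B $$ (t mod p, k)"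
    using k t kN by (simp add: Dm_idx dhalf_fh rs_D1 rs_D2)
  also have "\<dots> = fh (real n * rr (t mod p)) * fh (cc k) * B $$ (t mod p, k)"
    using fh_swap[OF n0] by simp
  also have "\<dots> = XX $$ (t mod p, k)" using k p0 by (simp add: XX_def)
  finally show "mat q (NN - q) (\<lambda>(k,t). dhalf Dm k * Dm $$ (k,q+t) * dhalf Dm (q+t)) $$ (k,t)
     = mat q (NN - q) (\<lambda>(k,t). XX $$ (t mod p, k)) $$ (k,t)"
    using k t by (simp add: NN_def)
qed auto

lemma QD_eq: "mat (NN - q) q (\<lambda>(t,k). dhalf Dm (q+t) * Dm $$ (q+t,k) * dhalf Dm k)
   = mat (NN - q) q (\<lambda>(t,k). XX $$ (t mod p, k))"
proof (intro eq_matI)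
  fix t k assume t: "t < dim_row (mat (NN - q) q (\<lambda>(t,k). XX $$ (t mod p, k)))"
    and k: "k < dim_col (mat (NN - q) q (\<lambda>(t,k). XX $$ (t mod p, k)))"
  then have k: "k < q" and t: "t < n*p" by (auto simp: NN_def)
  have p0: "p > 0" using q1 pq by simp
  have n0: "real n > 0" using n1 by simp
  have kN: "k < NN" "q + t < NN" using k t by (auto simp: NN_def)
  have "dhalf Dm (q+t) * Dm $$ (q+t,k) * dhalf Dm k = fh (real n * cc k) * fh (rr (t mod p)) * B $$ (t mod p, k)"
    using k t kN by (simp add: Dm_idx dhalf_fh rs_D1 rs_D2)
  also have "\<dots> = fh (real n * rr (t mod p)) * fh (cc k) * B $$ (t mod p, k)"
    using fh_swap[OF n0] by simp
  also have "\<dots> = XX $$ (t mod p, k)" using k p0 by (simp add: XX_def)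
  finally show "mat (NN - q) q (\<lambda>(t,k). dhalf Dm (q+t) * Dm $$ (q+t,k) * dhalf Dm k) $$ (t,k)
     = mat (NN - q) q (\<lambda>(t,k). XX $$ (t mod p, k)) $$ (t,k)"
    using k t by (simp add: NN_def)
qed auto

lemma prodC: "mat p (NN - p) (\<lambda>(i,j). if j < n*q then XX $$ (i, j mod q) else 0)
   * mat (NN - p) p (\<lambda>(j,i). if j < n*q then XX $$ (i, j mod q) else 0)
   = (real n \<cdot>\<^sub>m XX) * transpose_mat XX"
proof (intro eq_matI)
  fix i i' assume "i < dim_row ((real n \<cdot>\<^sub>m XX) * transpose_mat XX)"
    "i' < dim_col ((real n \<cdot>\<^sub>m XX) * transpose_mat XX)"
  then have i: "i < p" and i': "i' < p" using XX_carrier by auto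
  have "(mat p (NN - p) (\<lambda>(i,j). if j < n*q then XX $$ (i, j mod q) else 0)
   * mat (NN - p) p (\<lambda>(j,i). if j < n*q then XX $$ (i, j mod q) else 0)) $$ (i,i')
   = (\<Sum>j<NN - p. (if j < n*q then XX $$ (i, j mod q) else 0) * (if j < n*q then XX $$ (i', j mod q) else 0))"
    using i i' by (simp add: scalar_prod_def lessThan_atLeast0)
  also have "\<dots> = (\<Sum>j<NN - p. if 0 \<le> j \<and> j < 0 + n*q then XX $$ (i, (j-0) mod q) * XX $$ (i', (j-0) mod q) else 0)"
    by (intro sum.cong) auto
  also have "\<dots> = (\<Sum>t<n*q. XX $$ (i, t mod q) * XX $$ (i', t mod q))"
    by (rule sum_restrict_ivl) (use NN_ge in simp)
  also have "\<dots> = real n * (\<Sum>k<q. XX $$ (i, k) * XX $$ (i', k))"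
    by (rule sum_mod_rep)
  also have "\<dots> = ((real n \<cdot>\<^sub>m XX) * transpose_mat XX) $$ (i,i')"
    using i i' XX_carrier by (simp add: scalar_prod_def lessThan_atLeast0 sum_distrib_left mult.assoc)
  finally show "(mat p (NN - p) (\<lambda>(i,j). if j < n*q then XX $$ (i, j mod q) else 0)
   * mat (NN - p) p (\<lambda>(j,i). if j < n*q then XX $$ (i, j mod q) else 0)) $$ (i,i')
   = ((real n \<cdot>\<^sub>m XX) * transpose_mat XX) $$ (i,i')" .
qed (use XX_carrier in auto)

lemma prodD: "mat q (NN - q) (\<lambda>(k,t). XX $$ (t mod p, k))
   * mat (NN - q) q (\<lambda>(t,k). XX $$ (t mod p, k))
   = transpose_mat XX * (real n \<cdot>\<^sub>m XX)"
proof (intro eq_matI)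
  fix k k' assume "k < dim_row (transpose_mat XX * (real n \<cdot>\<^sub>m XX))"
    "k' < dim_col (transpose_mat XX * (real n \<cdot>\<^sub>m XX))"
  then have k: "k < q" and k': "k' < q" using XX_carrier by auto
  have "(mat q (NN - q) (\<lambda>(k,t). XX $$ (t mod p, k))
   * mat (NN - q) q (\<lambda>(t,k). XX $$ (t mod p, k))) $$ (k,k')
   = (\<Sum>t<n*p. XX $$ (t mod p, k) * XX $$ (t mod p, k'))"
    using k k' by (simp add: scalar_prod_def lessThan_atLeast0 NN_def)
  also have "\<dots> = real n * (\<Sum>l<p. XX $$ (l, k) * XX $$ (l, k'))"
    by (rule sum_mod_rep)
  also have "\<dots> = (transpose_mat XX * (real n \<cdot>\<^sub>m XX)) $$ (k,k')"
    using k k' XX_carrier by (simp add: scalar_prod_def lessThan_atLeast0 sum_distrib_left mult_ac)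
  finally show "(mat q (NN - q) (\<lambda>(k,t). XX $$ (t mod p, k))
   * mat (NN - q) q (\<lambda>(t,k). XX $$ (t mod p, k))) $$ (k,k')
   = (transpose_mat XX * (real n \<cdot>\<^sub>m XX)) $$ (k,k')" .
qed (use XX_carrier in auto)

end


lemma alg_cancel:
  fixes y :: "'a::idom"
  assumes y: "y \<noteq> 0" and pN: "p \<le> N" and qN: "q \<le> N"
    and h1: "cC * y^p = y^(N-p) * dp" and h2: "cD * y^q = y^(N-q) * dq"
    and h3: "d0 * y^p = y^q * dp" and h4: "d0 * y^q = y^p * dq"
  shows "cC = cD"
proof -
  have e: "dp * y^q * y^q = dq * y^p * y^p"
  proof -
    have "dp * y^q * y^q = (y^q * dp) * y^q" by (simp add: mult_ac)
    also have "\<dots> = d0 * y^p * y^q" using h3 by simp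
    also have "\<dots> = (d0 * y^q) * y^p" by (simp add: mult_ac)
    also have "\<dots> = dq * y^p * y^p" using h4 by (simp add: mult_ac)
    finally show ?thesis .
  qed
  have "cC * (y^p * y^q * y^q) = y^(N-p) * (dp * y^q * y^q)" using h1
    by (metis mult.assoc mult.commute)
  also have "\<dots> = y^(N-p) * y^p * y^p * dq" using e by (simp add: mult_ac)
  also have "\<dots> = y^(N+p) * dq" using pN by (simp add: power_add[symmetric])
  finally have c1: "cC * (y^p * y^q * y^q) = y^(N+p) * dq" .
  have "cD * (y^p * y^q * y^q) = (cD * y^q) * y^p * y^q" by (simp add: mult_ac)
  also have "\<dots> = y^(N-q) * y^q * y^p * dq" using h2 by (simp add: mult_ac)
  also have "\<dots> = y^(N+p) * dq" using qN by (simp add: power_add[symmetric] add.commute)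
  finally have c2: "cD * (y^p * y^q * y^q) = y^(N+p) * dq" .
  have nz: "y^p * y^q * y^q \<noteq> 0" using y by simp
  from c1 c2 have "cC * (y^p * y^q * y^q) = cD * (y^p * y^q * y^q)" by simp
  then show ?thesis using nz mult_right_cancel by blast
qed



context
  fixes n p q :: nat and B :: "real mat"
  assumes q1: "q \<ge> 1" and pq: "p \<ge> q" and n1: "n \<ge> 1"
    and Bc: "B \<in> carrier_mat p q"
begin

lemmas ctx = q1 pq n1 Bc

lemma charC: "char_poly (norm_lap (Cm n p q B)) * [:-1,1:]^p
   = [:-1,1:]^(NN n p q - p) * det ([:-1,1:]^2 \<cdot>\<^sub>m 1\<^sub>m p
        - map_mat (\<lambda>x. [:x:]) ((real n \<cdot>\<^sub>m XX n p q B) * transpose_mat (XX n p q B)))"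
proof -
  let ?N = "NN n p q" and ?C = "Cm n p q B"
  have pN: "p \<le> ?N" using NN_ge[OF ctx] by simp
  have Cc: "?C \<in> carrier_mat (p + (?N - p)) (p + (?N - p))"
    using Cm_carrier[OF ctx] pN by simp
  have L: "norm_lap ?C = four_block_mat (1\<^sub>m p)
      (- mat p (?N - p) (\<lambda>(i,j). dhalf ?C i * ?C $$ (i,p+j) * dhalf ?C (p+j)))
      (- mat (?N - p) p (\<lambda>(j,i). dhalf ?C (p+j) * ?C $$ (p+j,i) * dhalf ?C i)) (1\<^sub>m (?N - p))"
    by (rule normlap_block[OF Cc]) (use pN in \<open>auto simp: Cm_idx[OF ctx]\<close>)
  show ?thesis unfolding L PC_eq[OF ctx] QC_eq[OF ctx]
    by (subst char_lap[of _ p "?N - p"]) (auto simp: prodC[OF ctx])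
qed

lemma charD: "char_poly (norm_lap (Dm n p q B)) * [:-1,1:]^q
   = [:-1,1:]^(NN n p q - q) * det ([:-1,1:]^2 \<cdot>\<^sub>m 1\<^sub>m q
        - map_mat (\<lambda>x. [:x:]) (transpose_mat (XX n p q B) * (real n \<cdot>\<^sub>m XX n p q B)))"
proof -
  let ?N = "NN n p q" and ?C = "Dm n p q B"
  have pN: "q \<le> ?N" by (simp add: NN_def[OF ctx])
  have Cc: "?C \<in> carrier_mat (q + (?N - q)) (q + (?N - q))"
    using Dm_carrier[OF ctx] pN by simp
  have L: "norm_lap ?C = four_block_mat (1\<^sub>m q)
      (- mat q (?N - q) (\<lambda>(i,j). dhalf ?C i * ?C $$ (i,q+j) * dhalf ?C (q+j)))
      (- mat (?N - q) q (\<lambda>(j,i). dhalf ?C (q+j) * ?C $$ (q+j,i) * dhalf ?C i)) (1\<^sub>m (?N - q))"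
    by (rule normlap_block[OF Cc]) (use pN in \<open>auto simp: Dm_idx[OF ctx]\<close>)
  show ?thesis unfolding L PD_eq[OF ctx] QD_eq[OF ctx]
    by (subst char_lap[of _ q "?N - q"]) (auto simp: prodD[OF ctx])
qed

end

theorem theorem3p3:
  fixes n p q :: nat and B :: "real mat"
  assumes "q \<ge> 1" and "p \<ge> q" and "n \<ge> 1"
    and "B \<in> carrier_mat p q"
    and "\<And>i j. i < p \<Longrightarrow> j < q \<Longrightarrow> B $$ (i, j) \<ge> 0"
  shows "cospectral
           (norm_lap (dsum (blockC n p q B) (0\<^sub>m ((n - 1) * (p - q)) ((n - 1) * (p - q)))))
           (norm_lap (blockD n p q B))"
proof -
  note ctx = assms(1-4)
  let ?y = "[:-1,1:] :: real poly"
  let ?X = "XX n p q B"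
  let ?N = "NN n p q"
  define P0 where "P0 = map_mat (\<lambda>x::real. [:x:]) (real n \<cdot>\<^sub>m ?X)"
  define Q0 where "Q0 = map_mat (\<lambda>x::real. [:x:]) (transpose_mat ?X)"
  have Xc: "?X \<in> carrier_mat p q" by (rule XX_carrier[OF ctx])
  have P0c: "P0 \<in> carrier_mat p q" unfolding P0_def using Xc by auto
  have Q0c: "Q0 \<in> carrier_mat q p" unfolding Q0_def using Xc by auto
  have PQ: "P0 * Q0 = map_mat (\<lambda>x. [:x:]) ((real n \<cdot>\<^sub>m ?X) * transpose_mat ?X)"
    unfolding P0_def Q0_def using Xc by (subst cpoly.mat_hom_mult[of _ p q _ p]) auto
  have QP: "Q0 * P0 = map_mat (\<lambda>x. [:x:]) (transpose_mat ?X * (real n \<cdot>\<^sub>m ?X))"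
    unfolding P0_def Q0_def using Xc by (subst cpoly.mat_hom_mult[of _ q p _ q]) auto
  note g1 = blk_G1[OF P0c Q0c, of ?y, unfolded PQ]
  note g2 = blk_G2[OF P0c Q0c, of ?y, unfolded QP]
  have y0: "?y \<noteq> 0" by simp
  have pN: "p \<le> ?N" using NN_ge[OF ctx] by simp
  have qN: "q \<le> ?N" by (simp add: NN_def[OF ctx])
  have eq: "char_poly (norm_lap (Cm n p q B)) = char_poly (norm_lap (Dm n p q B))"
    by (rule alg_cancel[OF y0 pN qN charC[OF ctx] charD[OF ctx] g1 g2])
  let ?LC = "norm_lap (Cm n p q B)" and ?LD = "norm_lap (Dm n p q B)"
  have LCc: "?LC \<in> carrier_mat ?N ?N"
    using Cm_carrier[OF ctx] unfolding norm_lap_def by auto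
  have LDc: "?LD \<in> carrier_mat ?N ?N"
    using Dm_carrier[OF ctx] unfolding norm_lap_def by auto
  have "char_poly (map_mat complex_of_real ?LC) = char_poly (map_mat complex_of_real ?LD)"
    unfolding of_real_hom.char_poly_hom[OF LCc] of_real_hom.char_poly_hom[OF LDc] eq ..
  then have "cospectral ?LC ?LD"
    unfolding cospectral_def using LCc LDc by auto
  then show ?thesis unfolding Cm_def[OF ctx] Dm_def[OF ctx] .
qed


end
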